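(* Let $\mathsf{P}=\mathrm{conv}(v_0,\dots,v_r)\subseteq\mathbb{Q}^2$ be a $\mathbb{Q}$-Gorenstein polytope of index $\imath\ge2$. If $\mathsf{P}$ contains two distinct lattice points different from the origin, then $\mathsf{P}$ is not canonical.
   Context: Let $d\ge2$, $r\ge d$ and $v_0:=0,v_1,\dots,v_r\in\mathbb{Q}^d$ pairwise different such that $\mathsf{P}=\mathrm{conv}(v_0,\dots,v_r)$ is full-dimensional with vertex set $\{v_0,\dots,v_r\}$. $\mathsf{P}$ is $\mathbb{Q}$-Gorenstein of index $\imath\in\mathbb{Z}_{\ge1}$ if there exist $\alpha_1,\dots,\alpha_d\in\mathbb{Z}$ with $\sum_{j}\alpha_jv_{ij}=\imath$ for all $i=1,\dots,r$ and $\imath$ is minimal with this property. Such $\mathsf{P}$ is canonical if for every lattice point $0\ne p\in\mathsf{P}$ we have $\sum_j\alpha_jp_j=\imath$. *)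

theory Defs
  imports "HOL-Analysis.Analysis"
begin

definition rat_point :: "real \<times> real \<Rightarrow> bool" where
  "rat_point p \<longleftrightarrow> fst p \<in> \<rat> \<and> snd p \<in> \<rat>"

definition lattice_point :: "real \<times> real \<Rightarrow> bool" where
  "lattice_point p \<longleftrightarrow> fst p \<in> \<int> \<and> snd p \<in> \<int>"

definition polytope :: "(nat \<Rightarrow> real \<times> real) \<Rightarrow> nat \<Rightarrow> (real \<times> real) set" where
  "polytope v r = convex hull (v ` {0..r})"

definition gor_functional :: "(nat \<Rightarrow> real \<times> real) \<Rightarrow> nat \<Rightarrow> int \<Rightarrow> int \<Rightarrow> int \<Rightarrow> bool" where
  "gor_functional v r m a1 a2 \<longleftrightarrow>
     (\<forall>i\<in>{1..r}. of_int a1 * fst (v i) + of_int a2 * snd (v i) = of_int m)"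

definition QGorenstein_index :: "(nat \<Rightarrow> real \<times> real) \<Rightarrow> nat \<Rightarrow> int \<Rightarrow> bool" where
  "QGorenstein_index v r idx \<longleftrightarrow>
     idx \<ge> 1 \<and> (\<exists>a1 a2. gor_functional v r idx a1 a2) \<and>
     (\<forall>m. 1 \<le> m \<and> m < idx \<longrightarrow> \<not> (\<exists>a1 a2. gor_functional v r m a1 a2))"

definition canonical :: "(nat \<Rightarrow> real \<times> real) \<Rightarrow> nat \<Rightarrow> int \<Rightarrow> bool" where
  "canonical v r idx \<longleftrightarrow>
     (\<exists>a1 a2. gor_functional v r idx a1 a2 \<and>
        (\<forall>p\<in>polytope v r. lattice_point p \<and> p \<noteq> 0 \<longrightarrow>
            of_int a1 * fst p + of_int a2 * snd p = of_int idx))"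

end

theory Submission
  imports Defs
begin

lemma tri_in:
  fixes P :: "(real \<times> real) set"
  assumes "convex P" "0 \<in> P" "a \<in> P" "b \<in> P" "s \<ge> 0" "t \<ge> 0" "s + t \<le> 1"
  shows "(s * fst a + t * fst b, s * snd a + t * snd b) \<in> P"
proof -
  have "convex hull {0, a, b} \<subseteq> P"
    using assms(1-4) by (intro hull_minimal) auto
  moreover have "(1 - s - t) *\<^sub>R (0::real\<times>real) + s *\<^sub>R a + t *\<^sub>R b \<in> convex hull {0, a, b}"
    unfolding convex_hull_3 using assms(5-7) by (intro CollectI exI[of _ "1-s-t"] exI[of _ s] exI[of _ t]) auto
  moreover have "(1 - s - t) *\<^sub>R (0::real\<times>real) + s *\<^sub>R a + t *\<^sub>R b = (s * fst a + t * fst b, s * snd a + t * snd b)"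
    by (simp add: prod_eq_iff)
  ultimately show ?thesis by auto
qed

lemma key:
  fixes P :: "(real \<times> real) set" and a b x :: "real \<times> real" and A1 A2 c :: real
  assumes cv: "convex P" and z: "0 \<in> P" and aP: "a \<in> P" and bP: "b \<in> P"
    and la: "lattice_point a" and lb: "lattice_point b" and ab: "a \<noteq> b"
    and c: "c \<noteq> 0"
    and H: "\<forall>p\<in>P. lattice_point p \<and> p \<noteq> 0 \<longrightarrow> A1 * fst p + A2 * snd p = c"
    and a0: "a \<noteq> 0" and b0: "b \<noteq> 0"
    and lx: "lattice_point x"
  shows "(A1 * fst x + A2 * snd x) / c \<in> \<int>"
proof -
  define f where "f = (\<lambda>p::real\<times>real. A1 * fst p + A2 * snd p)"
  have fa: "f a = c" using H aP la a0 unfolding f_def by auto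
  have fb: "f b = c" using H bP lb b0 unfolding f_def by auto
  define D where "D = fst a * snd b - snd a * fst b"
  have D: "D \<noteq> 0"
  proof
    assume D0: "D = 0"
    have "fst b * f a - fst a * f b = A2 * (fst b * snd a - fst a * snd b)"
      unfolding f_def by (simp add: algebra_simps)
    also have "\<dots> = 0" using D0 unfolding D_def by (simp add: algebra_simps)
    finally have "c * (fst b - fst a) = 0" using fa fb by (simp add: algebra_simps)
    hence 1: "fst a = fst b" using c by simp
    have "snd b * f a - snd a * f b = A1 * (snd b * fst a - snd a * fst b)"
      unfolding f_def by (simp add: algebra_simps)
    also have "\<dots> = 0" using D0 unfolding D_def by (simp add: algebra_simps)
    finally have "c * (snd b - snd a) = 0" using fa fb by (simp add: algebra_simps)
    hence "snd a = snd b" using c by simp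
    with 1 ab show False by (simp add: prod_eq_iff)
  qed
  define l where "l = (fst x * snd b - snd x * fst b) / D"
  define m where "m = (fst a * snd x - snd a * fst x) / D"
  have lD: "l * D = fst x * snd b - snd x * fst b" unfolding l_def using D by simp
  have mD: "m * D = fst a * snd x - snd a * fst x" unfolding m_def using D by simp
  have "fst x * D = (l * D) * fst a + (m * D) * fst b"
    by (simp only: lD mD) (simp add: D_def algebra_simps)
  hence "fst x * D = (l * fst a + m * fst b) * D" by (simp add: algebra_simps)
  hence x1: "fst x = l * fst a + m * fst b" using D by simp
  have "snd x * D = (l * D) * snd a + (m * D) * snd b"
    by (simp only: lD mD) (simp add: D_def algebra_simps)
  hence "snd x * D = (l * snd a + m * snd b) * D" by (simp add: algebra_simps)
  hence x2: "snd x = l * snd a + m * snd b" using D by simp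
  have lin: "\<And>s t. f (s * fst a + t * fst b, s * snd a + t * snd b) = (s + t) * c"
  proof -
    fix s t
    have "f (s * fst a + t * fst b, s * snd a + t * snd b) = s * f a + t * f b"
      unfolding f_def by (simp add: algebra_simps)
    then show "f (s * fst a + t * fst b, s * snd a + t * snd b) = (s + t) * c"
      using fa fb by (simp add: algebra_simps)
  qed
  have fx: "f x = (l + m) * c"
    using lin[of l m] x1 x2 by (simp add: f_def)
  define l' where "l' = frac l"
  define m' where "m' = frac m"
  have l'0: "l' \<ge> 0" "l' < 1" unfolding l'_def by (auto simp: frac_lt_1)
  have m'0: "m' \<ge> 0" "m' < 1" unfolding m'_def by (auto simp: frac_lt_1)
  define y where "y = (l' * fst a + m' * fst b, l' * snd a + m' * snd b)"
  have ly: "lattice_point y"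
  proof -
    have e1: "fst y = fst x - of_int \<lfloor>l\<rfloor> * fst a - of_int \<lfloor>m\<rfloor> * fst b"
      unfolding y_def l'_def m'_def frac_def using x1 by (simp add: algebra_simps)
    have e2: "snd y = snd x - of_int \<lfloor>l\<rfloor> * snd a - of_int \<lfloor>m\<rfloor> * snd b"
      unfolding y_def l'_def m'_def frac_def using x2 by (simp add: algebra_simps)
    show ?thesis using la lb lx unfolding lattice_point_def e1 e2
      by (auto intro!: Ints_diff Ints_mult)
  qed
  have fy: "f y = (l' + m') * c" unfolding y_def by (rule lin)
  have inj: "\<And>s t. (s * fst a + t * fst b, s * snd a + t * snd b) = 0 \<Longrightarrow> s = 0 \<and> t = 0"
  proof -
    fix s t :: real
    assume "(s * fst a + t * fst b, s * snd a + t * snd b) = 0"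
    hence h1: "s * fst a + t * fst b = 0" and h2: "s * snd a + t * snd b = 0"
      by (auto simp: prod_eq_iff)
    have "s * D = snd b * (s * fst a + t * fst b) - fst b * (s * snd a + t * snd b)"
      unfolding D_def by (simp add: algebra_simps)
    hence "s * D = 0" using h1 h2 by simp
    moreover have "t * D = fst a * (s * snd a + t * snd b) - snd a * (s * fst a + t * fst b)"
      unfolding D_def by (simp add: algebra_simps)
    hence "t * D = 0" using h1 h2 by simp
    ultimately show "s = 0 \<and> t = 0" using D by simp
  qed
  have sum01: "l' + m' = 0 \<or> l' + m' = 1"
  proof (cases "l' + m' \<le> 1")
    case True
    have yP: "y \<in> P" unfolding y_def using tri_in[OF cv z aP bP] l'0 m'0 True by auto
    show ?thesis
    proof (cases "y = 0")
      case True
      then show ?thesis using inj[of l' m'] unfolding y_def by auto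
    next
      case False
      then have "f y = c" using H yP ly unfolding f_def by auto
      then show ?thesis using fy c by simp
    qed
  next
    case False
    define z where "z = ((1 - l') * fst a + (1 - m') * fst b, (1 - l') * snd a + (1 - m') * snd b)"
    have zP: "z \<in> P" unfolding z_def using tri_in[OF cv z aP bP, of "1 - l'" "1 - m'"] l'0 m'0 False by auto
    have lz: "lattice_point z"
    proof -
      have "fst z = fst a + fst b - fst y" "snd z = snd a + snd b - snd y"
        unfolding z_def y_def by (simp_all add: algebra_simps)
      then show ?thesis using la lb ly unfolding lattice_point_def by auto
    qed
    have z0: "z \<noteq> 0" using inj[of "1 - l'" "1 - m'"] l'0 m'0 unfolding z_def by auto
    have "f z = c" using H zP lz z0 unfolding f_def by auto
    moreover have "f z = ((1 - l') + (1 - m')) * c" unfolding z_def by (rule lin)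
    ultimately have "(1 - l') + (1 - m') = 1" using c by simp
    then show ?thesis using False by simp
  qed
  have "l + m = of_int \<lfloor>l\<rfloor> + of_int \<lfloor>m\<rfloor> + (l' + m')"
    unfolding l'_def m'_def frac_def by simp
  hence "l + m \<in> \<int>" using sum01 by auto
  then show ?thesis using fx c by (simp add: f_def)
qed

theorem mainTheorem6:
  fixes v :: "nat \<Rightarrow> real \<times> real" and r :: nat and idx :: int
  assumes "r \<ge> 2"
    and "v 0 = 0"
    and "\<forall>i\<in>{0..r}. rat_point (v i)"
    and "inj_on v {0..r}"
    and "interior (polytope v r) \<noteq> {}"
    and "{x. x extreme_point_of (polytope v r)} = v ` {0..r}"
    and "QGorenstein_index v r idx"
    and "idx \<ge> 2"
    and "\<exists>p q. p \<in> polytope v r \<and> q \<in> polytope v r \<and> lattice_point p \<and> lattice_point q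
               \<and> p \<noteq> 0 \<and> q \<noteq> 0 \<and> p \<noteq> q"
  shows "\<not> canonical v r idx"
proof
  assume "canonical v r idx"
  then obtain a1 a2 where g: "gor_functional v r idx a1 a2"
    and H: "\<forall>p\<in>polytope v r. lattice_point p \<and> p \<noteq> 0 \<longrightarrow>
            of_int a1 * fst p + of_int a2 * snd p = of_int idx"
    unfolding canonical_def by blast
  obtain a b where ab: "a \<in> polytope v r" "b \<in> polytope v r" "lattice_point a" "lattice_point b"
    "a \<noteq> 0" "b \<noteq> 0" "a \<noteq> b" using assms(9) by blast
  have cv: "convex (polytope v r)" unfolding polytope_def by simp
  have z: "0 \<in> polytope v r" unfolding polytope_def using assms(2)
    by (metis atLeastAtMost_iff hull_inc image_eqI le0)
  have c: "(of_int idx :: real) \<noteq> 0" using assms(8) by simp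
  have K: "\<And>x. lattice_point x \<Longrightarrow> (of_int a1 * fst x + of_int a2 * snd x) / of_int idx \<in> \<int>"
    by (rule key[OF cv z ab(1,2,3,4,7) c H ab(5,6)])
  have "(of_int a1 :: real) / of_int idx \<in> \<int>"
    using K[of "(1,0)"] by (simp add: lattice_point_def)
  then obtain k1 where k1: "(of_int a1 :: real) / of_int idx = of_int k1" by (auto elim: Ints_cases)
  have "(of_int a2 :: real) / of_int idx \<in> \<int>"
    using K[of "(0,1)"] by (simp add: lattice_point_def)
  then obtain k2 where k2: "(of_int a2 :: real) / of_int idx = of_int k2" by (auto elim: Ints_cases)
  have "gor_functional v r 1 k1 k2"
    unfolding gor_functional_def
  proof
    fix i assume "i \<in> {1..r}"
    hence e: "of_int a1 * fst (v i) + of_int a2 * snd (v i) = of_int idx"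
      using g unfolding gor_functional_def by blast
    have "of_int k1 * fst (v i) + of_int k2 * snd (v i)
          = (of_int a1 * fst (v i) + of_int a2 * snd (v i)) / of_int idx"
      using k1[symmetric] k2[symmetric] by (simp add: add_divide_distrib)
    also have "\<dots> = 1" using e c by simp
    finally show "of_int k1 * fst (v i) + of_int k2 * snd (v i) = of_int 1" by simp
  qed
  moreover have "1 \<le> (1::int) \<and> 1 < idx" using assms(8) by simp
  ultimately show False using assms(7) unfolding QGorenstein_index_def by blast
qed

end
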